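(* Let $(X,+,d)$ be an Abelian metric group with translation-invariant metric $d$ such that every non-empty open ball in $X$ contains infinitely many elements. Let $A\in K(X)$. If the spectre operator $S:K(X)\to K(X)$ is continuous at $A$ (with respect to the Pompeiu–Hausdorff metric), then $S(A)=\{0\}$.
   Context: $d$ satisfies $d(x,y)=d(x+z,y+z)$ for all $x,y,z\in X$; $0$ is the neutral element. $K(X)$ is the family of non-empty compact subsets of $X$ with the Pompeiu–Hausdorff metric $d_H(A,B)=\max\{\sup_{a\in A}d(a,B),\sup_{b\in B}d(A,b)\}$. The spectre of $A\subset X$ is $S(A):=\{z\in X:\ \forall_{a\in A}\ (a+z\in A \text{ or } a-z\in A)\}$; it is compact for compact non-empty $A$. *)

theory Defs
  imports "HOL-Analysis.Analysis"
begin

text \<open>Pompeiu--Hausdorff distance (intended for non-empty compact sets).\<close>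
definition hausdorff_dist :: "'a::metric_space set \<Rightarrow> 'a set \<Rightarrow> real" where
  "hausdorff_dist A B = max (SUP a\<in>A. infdist a B) (SUP b\<in>B. infdist b A)"

definition spectre :: "'a::ab_group_add set \<Rightarrow> 'a set" where
  "spectre A = {z. \<forall>a\<in>A. a + z \<in> A \<or> a - z \<in> A}"

definition Kset :: "'a::metric_space set set" where
  "Kset = {A. A \<noteq> {} \<and> compact A}"

end

theory Submission
  imports Defs
begin

lemma spectre_sym: "z \<in> spectre A \<Longrightarrow> - z \<in> spectre A"
  unfolding spectre_def by auto

lemma spectre_zero: "0 \<in> spectre A"
  unfolding spectre_def by auto

lemma spectre_generic:
  fixes F :: "'a::ab_group_add set"
  assumes xF: "\<And>p q r. p \<in> F \<Longrightarrow> q \<in> F \<Longrightarrow> r \<in> F \<Longrightarrow> x \<noteq> p + q - r"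
    and t: "t1 \<in> F" "t2 \<in> F" "t3 \<in> F" "t1 \<noteq> t2" "t1 \<noteq> t3" "t2 \<noteq> t3"
  shows "spectre (insert x F) = {0}"
proof
  show "{0} \<subseteq> spectre (insert x F)" using spectre_zero by auto
next
  show "spectre (insert x F) \<subseteq> {0}"
  proof
    fix z assume z: "z \<in> spectre (insert x F)"
    show "z \<in> {0}"
    proof (rule ccontr)
      assume nz: "z \<notin> {0}"
      have "\<exists>w. w \<in> spectre (insert x F) \<and> w \<noteq> 0 \<and> x + w \<in> insert x F"
      proof -
        have "x + z \<in> insert x F \<or> x - z \<in> insert x F" using z unfolding spectre_def by auto
        moreover have "x - z = x + (- z)" by simp
        ultimately show ?thesis using z nz spectre_sym[OF z] by (metis neg_equal_0_iff_equal singletonI)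
      qed
      then obtain w where w: "w \<in> spectre (insert x F)" "w \<noteq> 0" "x + w \<in> insert x F" by blast
      then have "x + w \<noteq> x" by simp
      with w obtain m where m: "m \<in> F" "x + w = m" by auto
      have wm: "w = m - x" using m by (simp add: algebra_simps)
      have "\<exists>k\<in>F. k \<noteq> m \<and> k + m - x \<noteq> x"
      proof (rule ccontr)
        assume "\<not> ?thesis"
        then have h: "\<And>k. k \<in> F \<Longrightarrow> k = m \<or> k = x + x - m"
          by (metis add_diff_cancel_right diff_add_cancel diff_diff_eq2)
        from h[OF t(1)] h[OF t(2)] h[OF t(3)] t(4-6) show False by auto
      qed
      then obtain k where k: "k \<in> F" "k \<noteq> m" "k + m - x \<noteq> x" by blast
      have "k + w \<in> insert x F \<or> k - w \<in> insert x F" using w(1) k(1) unfolding spectre_def by auto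
      then show False
      proof
        assume "k + w \<in> insert x F"
        then have "k + m - x \<in> insert x F" using wm by (simp add: algebra_simps)
        then have "k + m - x \<in> F" using k(3) by auto
        then obtain l where l: "l \<in> F" "k + m - x = l" by blast
        then have "x = k + m - l" by (simp add: algebra_simps)
        with xF[OF k(1) m(1) l(1)] show False by simp
      next
        assume "k - w \<in> insert x F"
        then have e: "k - m + x \<in> insert x F" using wm by (simp add: algebra_simps)
        have "k - m + x \<noteq> x" using k(2) by simp
        with e obtain l where l: "l \<in> F" "k - m + x = l" by auto
        then have "x = l + m - k" by (simp add: algebra_simps)
        with xF[OF l(1) m(1) k(1)] show False by simp
      qed
    qed
  qed
qed

lemma hausdorff_le:
  fixes A B :: "'a::metric_space set"
  assumes "A \<noteq> {}" "B \<noteq> {}"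
    and "\<And>a. a \<in> A \<Longrightarrow> \<exists>b\<in>B. dist a b \<le> r"
    and "\<And>b. b \<in> B \<Longrightarrow> \<exists>a\<in>A. dist b a \<le> r"
  shows "hausdorff_dist A B \<le> r"
proof -
  have "(SUP a\<in>A. infdist a B) \<le> r"
    using assms(1) by (rule cSUP_least) (meson assms(3) infdist_le order_trans)
  moreover have "(SUP b\<in>B. infdist b A) \<le> r"
    using assms(2) by (rule cSUP_least) (meson assms(4) infdist_le order_trans)
  ultimately show ?thesis unfolding hausdorff_dist_def by simp
qed

theorem corollary3p7:
  fixes A :: "'a::{metric_space, ab_group_add} set"
  assumes transl_inv: "\<And>x y z :: 'a. dist x y = dist (x + z) (y + z)"
    and balls_infinite: "\<And>(x :: 'a) r. r > 0 \<Longrightarrow> infinite (ball x r)"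
    and A_K: "A \<in> Kset"
    and cont: "\<forall>e>0. \<exists>\<delta>>0. \<forall>B\<in>Kset. hausdorff_dist A B < \<delta> \<longrightarrow>
                 hausdorff_dist (spectre A) (spectre B) < e"
  shows "spectre A = {0}"
proof -
  have Ane: "A \<noteq> {}" and Ac: "compact A" using A_K unfolding Kset_def by auto
  then obtain a0 where a0: "a0 \<in> A" by blast
  have approx: "\<exists>B\<in>Kset. hausdorff_dist A B < d \<and> spectre B = {0}" if d: "d > 0" for d
  proof -
    have "A \<subseteq> (\<Union>c\<in>A. ball c (d/2))" using d by auto
    then obtain N where N: "N \<subseteq> A" "finite N" "A \<subseteq> (\<Union>c\<in>N. ball c (d/2))"
      using compactE_image[OF Ac, of A "\<lambda>c. ball c (d/2)"] by auto
    define S where "S = ball a0 (d/2)"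
    have Sinf: "infinite S" unfolding S_def using balls_infinite d by simp
    obtain t1 where t1: "t1 \<in> S" using infinite_imp_nonempty[OF Sinf] by blast
    have "infinite (S - {t1})" using Sinf by simp
    then obtain t2 where t2: "t2 \<in> S - {t1}"
      using infinite_imp_nonempty by blast
    have "infinite (S - {t1, t2})" using Sinf by simp
    then obtain t3 where t3: "t3 \<in> S - {t1, t2}"
      using infinite_imp_nonempty by blast
    define F where "F = N \<union> {t1, t2, t3}"
    have Ff: "finite F" unfolding F_def using N by auto
    define G where "G = (\<lambda>(p, q, r). p + q - r) ` (F \<times> F \<times> F)"
    have Gf: "finite G" unfolding G_def using Ff by auto
    obtain x where x: "x \<in> S - G"
      using infinite_imp_nonempty[OF Diff_infinite_finite[OF Gf Sinf]] by blast
    have xF: "x \<noteq> p + q - r" if "p \<in> F" "q \<in> F" "r \<in> F" for p q r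
    proof
      assume "x = p + q - r"
      then have "x \<in> G" unfolding G_def using that by force
      with x show False by blast
    qed
    define B where "B = insert x F"
    have spB: "spectre B = {0}" unfolding B_def
      by (rule spectre_generic[where ?t1.0=t1 and ?t2.0=t2 and ?t3.0=t3, OF xF]) (use t2 t3 in \<open>auto simp: F_def\<close>)
    have BK: "B \<in> Kset" unfolding B_def Kset_def using Ff finite_imp_compact by auto
    have SA: "\<exists>a\<in>A. dist b a \<le> d/2" if "b \<in> S" for b
      using that a0 unfolding S_def by (auto simp: dist_commute intro!: bexI[of _ a0])
    have "hausdorff_dist A B \<le> d/2"
    proof (rule hausdorff_le)
      show "A \<noteq> {}" by fact
      show "B \<noteq> {}" unfolding B_def by simp
      show "\<exists>b\<in>B. dist a b \<le> d/2" if "a \<in> A" for a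
      proof -
        from N(3) that obtain c where "c \<in> N" "dist c a < d/2" by auto
        then show ?thesis unfolding B_def F_def by (auto simp: dist_commute intro!: bexI[of _ c])
      qed
      show "\<exists>a\<in>A. dist b a \<le> d/2" if "b \<in> B" for b
      proof -
        have "b \<in> N \<or> b \<in> S" using that t1 t2 t3 x unfolding B_def F_def by auto
        then show ?thesis
        proof
          assume "b \<in> N" then show ?thesis using N(1) d by (auto intro!: bexI[of _ b])
        qed (rule SA)
      qed
    qed
    then have "hausdorff_dist A B < d" using d by simp
    with BK spB show ?thesis by blast
  qed
  obtain D where D: "\<And>x y. x \<in> A \<Longrightarrow> y \<in> A \<Longrightarrow> dist x y \<le> D"
    using compact_imp_bounded[OF Ac] unfolding bounded_two_points by blast
  have bnd: "dist z 0 \<le> D" if "z \<in> spectre A" for z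
  proof -
    have "a0 + z \<in> A \<or> a0 - z \<in> A" using that a0 unfolding spectre_def by auto
    then show ?thesis
    proof
      assume h: "a0 + z \<in> A"
      have "dist z 0 = dist (z + a0) (0 + a0)" by (rule transl_inv)
      also have "\<dots> = dist (a0 + z) a0" by (simp add: add.commute)
      finally show ?thesis using D[OF h a0] by simp
    next
      assume h: "a0 - z \<in> A"
      have "dist z 0 = dist (z + (a0 - z)) (0 + (a0 - z))" by (rule transl_inv)
      also have "\<dots> = dist a0 (a0 - z)" by simp
      finally show ?thesis using D[OF a0 h] by simp
    qed
  qed
  have small: "dist z 0 < e" if z: "z \<in> spectre A" and e: "e > 0" for z e
  proof -
    obtain \<delta> where \<delta>: "\<delta> > 0" "\<forall>B\<in>Kset. hausdorff_dist A B < \<delta> \<longrightarrow>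
                 hausdorff_dist (spectre A) (spectre B) < e" using cont e by blast
    obtain B where B: "B \<in> Kset" "hausdorff_dist A B < \<delta>" "spectre B = {0}"
      using approx[OF \<delta>(1)] by blast
    have h: "hausdorff_dist (spectre A) {0} < e" using \<delta>(2) B by auto
    have bdd: "bdd_above ((\<lambda>a. infdist a {0}) ` spectre A)"
      using bnd by (auto intro!: bdd_aboveI2)
    have "dist z 0 = infdist z {0}" by simp
    also have "\<dots> \<le> (SUP a\<in>spectre A. infdist a {0})" by (rule cSUP_upper[OF z bdd])
    also have "\<dots> \<le> hausdorff_dist (spectre A) {0}" unfolding hausdorff_dist_def by simp
    finally show ?thesis using h by simp
  qed
  show ?thesis
  proof
    show "spectre A \<subseteq> {0}"
    proof
      fix z assume z: "z \<in> spectre A"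
      have "dist z 0 = 0"
      proof (rule ccontr)
        assume "dist z 0 \<noteq> 0"
        then have "dist z 0 > 0" by simp
        from small[OF z this] show False by simp
      qed
      then show "z \<in> {0}" by simp
    qed
    show "{0} \<subseteq> spectre A" using spectre_zero by auto
  qed
qed

end
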